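(* Let $q$ be a prime with $q \equiv 3 \pmod 8$ (there are infinitely many such primes). Let $n \geq 1$ be an integer, $v = 3q^n$, and $k$ an odd positive integer. Then there are no integers $a_1, \ldots, a_k$ with $1 \leq a_j < v$ such that $\prod_{j=1}^k a_j = \prod_{j=1}^k (v - a_j)$. *)

theory Defs
  imports "HOL-Computational_Algebra.Primes"
begin

end

theory Submission
  imports Defs "HOL-Number_Theory.Number_Theory"
begin

lemma decomp_aux: "\<And>a::int. nat \<bar>a\<bar> = N \<Longrightarrow> a \<noteq> 0 \<Longrightarrow> (p::int) > 1 \<Longrightarrow> \<exists>g b. a = p^g * b \<and> \<not> p dvd b"
proof (induction N rule: less_induct)
  case (less N)
  show ?case
  proof (cases "p dvd a")
    case False then show ?thesis by (metis power_0 mult_1)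
  next
    case True
    then obtain a' where a': "a = p * a'" by blast
    have "a' \<noteq> 0" using less a' by auto
    have "\<bar>a'\<bar> < \<bar>a\<bar>" using a' \<open>a' \<noteq> 0\<close> less.prems(3)
      by (simp add: abs_mult)
    then have "nat \<bar>a'\<bar> < N" using less.prems(1) by linarith
    then obtain g b where "a' = p^g * b" "\<not> p dvd b"
      using less.IH[OF _ refl \<open>a' \<noteq> 0\<close> less.prems(3)] by blast
    then show ?thesis using a' by (metis mult.assoc power_Suc)
  qed
qed

lemma decomp: "(a::int) \<noteq> 0 \<Longrightarrow> (p::int) > 1 \<Longrightarrow> \<exists>g b. a = p^g * b \<and> \<not> p dvd b"
  using decomp_aux by blast

lemma two_nonres:
  assumes "prime q" "q mod 8 = 3"
  shows "[2 ^ ((q - 1) div 2) = - 1] (mod int q)"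
proof -
  have q2: "2 < q" using assms(2) mod_less_eq_dividend[of q 8] by linarith
  interpret GAUSS q 2
  proof
    show "prime q" by fact
    show "2 < q" by fact
    show "[2 \<noteq> 0] (mod int q)" using q2 by (simp add: cong_0_iff zdvd_not_zless)
    show "(0::int) < 2" by simp
  qed
  obtain m where m: "q = 8*m+3" using assms(2) by (metis div_mod_decomp mult.commute)
  have h: "(int q - 1) div 2 = 4*int m+1" using m by simp
  have C: "C = (\<lambda>x. 2*x) ` {0<..4*int m+1}"
    unfolding C_def B_def A_def h image_image
    by (rule image_cong) (auto simp: m)
  have E: "E = (\<lambda>x. 2*x) ` {2*int m+1..4*int m+1}"
    unfolding E_def C h by auto
  have "card E = 2*m+1"
    unfolding E by (subst card_image) (auto simp: inj_on_def)
  then have L: "Legendre 2 q = -1" using gauss_lemma by simp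
  show ?thesis using euler_criterion[OF assms(1) q2, of 2] L by (simp add: cong_sym)
qed

lemma pair_lemma:
  fixes q n :: nat and v a :: int
  assumes q: "prime q" "q mod 8 = 3" and v: "v = 3 * int q ^ n" and a: "1 \<le> a" "a < v"
  shows "\<exists>g b c. a = int q ^ g * b \<and> v - a = int q ^ g * c \<and> \<not> int q dvd b
           \<and> [c ^ ((q - 1) div 2) = - (b ^ ((q - 1) div 2))] (mod int q)"
proof -
  let ?h = "(q - 1) div 2"
  let ?Q = "int q"
  have q2: "3 \<le> q" using q(2) mod_less_eq_dividend[of q 8] by linarith
  obtain m where m: "q = 8*m+3" using q(2) by (metis div_mod_decomp mult.commute)
  have hodd: "odd ?h" using m by simp
  obtain g b where gb: "a = ?Q^g * b" "\<not> ?Q dvd b" using decomp[of a ?Q] a q2 by auto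
  have Qg: "?Q^g > 0" using q2 by simp
  have bpos: "b > 0" using gb Qg a by (metis zero_less_mult_pos zero_less_one order_less_le_trans)
  have "?Q^g \<le> a" using gb bpos Qg by simp
  have gn: "g \<le> n"
  proof (rule ccontr)
    assume "\<not> g \<le> n"
    then have "?Q^(Suc n) \<le> ?Q^g" using q2 by (intro power_increasing) auto
    moreover have "v \<le> ?Q^(Suc n)" using v q2 by simp
    ultimately show False using \<open>?Q^g \<le> a\<close> a by linarith
  qed
  have vsplit: "v = ?Q^g * (3 * ?Q^(n-g))" using v gn by (simp add: power_add[symmetric])
  define c where "c = 3 * ?Q^(n-g) - b"
  have vc: "v - a = ?Q^g * c" unfolding c_def using vsplit gb by (simp add: algebra_simps)
  have two: "[2 ^ ?h = - 1] (mod ?Q)" using two_nonres[OF q] .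
  have cong: "[c ^ ?h = - (b ^ ?h)] (mod ?Q)"
  proof (cases "g < n")
    case True
    have "?Q dvd ?Q^(n-g)" using True by simp
    then have "[c = -b] (mod ?Q)" unfolding c_def by (simp add: cong_iff_dvd_diff)
    then have "[c ^ ?h = (-b) ^ ?h] (mod ?Q)" by (rule cong_pow)
    then show ?thesis using hodd by simp
  next
    case False
    then have gn': "g = n" using gn by simp
    have "?Q^g * b < ?Q^g * 3" using a gb v gn' by simp
    then have "b < 3" using Qg by simp
    then have "b = 1 \<or> b = 2" using bpos by linarith
    then show ?thesis
    proof
      assume "b = 1" then have "c = 2" unfolding c_def using gn' by simp
      then show ?thesis using two \<open>b = 1\<close> by simp
    next
      assume "b = 2" then have "c = 1" unfolding c_def using gn' by simp
      then show ?thesis using two \<open>b = 2\<close> by (simp add: cong_iff_dvd_diff dvd_minus_iff add.commute)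
    qed
  qed
  show ?thesis using gb vc cong by blast
qed

theorem corollary4p13:
  fixes q :: nat and n k :: nat and v :: int
  assumes "prime q" and "q mod 8 = 3" and "n \<ge> 1"
    and "v = 3 * int q ^ n" and "odd k" and "k \<ge> 1"
  shows "\<not> (\<exists>a :: nat \<Rightarrow> int. (\<forall>j\<in>{1..k}. 1 \<le> a j \<and> a j < v) \<and>
           (\<Prod>j=1..k. a j) = (\<Prod>j=1..k. v - a j))"
proof
  assume "\<exists>a :: nat \<Rightarrow> int. (\<forall>j\<in>{1..k}. 1 \<le> a j \<and> a j < v) \<and>
           (\<Prod>j=1..k. a j) = (\<Prod>j=1..k. v - a j)"
  then obtain a :: "nat \<Rightarrow> int" where a: "\<forall>j\<in>{1..k}. 1 \<le> a j \<and> a j < v"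
    and eq: "(\<Prod>j=1..k. a j) = (\<Prod>j=1..k. v - a j)" by blast
  let ?h = "(q - 1) div 2"
  let ?Q = "int q"
  define P where "P j t \<longleftrightarrow> a j = ?Q ^ fst t * fst (snd t) \<and> v - a j = ?Q ^ fst t * snd (snd t)
      \<and> \<not> ?Q dvd fst (snd t) \<and> [snd (snd t) ^ ?h = - (fst (snd t) ^ ?h)] (mod ?Q)" for j t
  define T where "T j = (SOME t. P j t)" for j
  define g where "g j = fst (T j)" for j
  define b where "b j = fst (snd (T j))" for j
  define c where "c j = snd (snd (T j))" for j
  have PT: "P j (T j)" if "j \<in> {1..k}" for j
  proof -
    have "\<exists>t. P j t" using pair_lemma[OF assms(1,2,4), of "a j"] a that unfolding P_def by force
    then show ?thesis unfolding T_def by (rule someI_ex)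
  qed
  have ga: "a j = ?Q ^ g j * b j" and gc: "v - a j = ?Q ^ g j * c j" and nb: "\<not> ?Q dvd b j"
    and cg: "[c j ^ ?h = - (b j ^ ?h)] (mod ?Q)" if "j \<in> {1..k}" for j
    using PT[OF that] unfolding P_def g_def b_def c_def by auto
  have "(\<Prod>j=1..k. a j) = ?Q ^ (\<Sum>j=1..k. g j) * (\<Prod>j=1..k. b j)"
    by (simp add: ga prod.distrib power_sum)
  moreover have "(\<Prod>j=1..k. v - a j) = ?Q ^ (\<Sum>j=1..k. g j) * (\<Prod>j=1..k. c j)"
    by (simp add: gc prod.distrib power_sum)
  moreover have "?Q ^ (\<Sum>j=1..k. g j) \<noteq> 0" using assms(1) by (simp add: prime_gt_0_nat)
  ultimately have bc: "(\<Prod>j=1..k. b j) = (\<Prod>j=1..k. c j)" using eq by (metis mult_left_cancel)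
  define B where "B = (\<Prod>j=1..k. b j)"
  have "B ^ ?h = (\<Prod>j=1..k. c j ^ ?h)" using bc unfolding B_def by (simp add: prod_power_distrib)
  also have "[\<dots> = (\<Prod>j=1..k. - (b j ^ ?h))] (mod ?Q)" by (rule cong_prod) (use cg in auto)
  also have "(\<Prod>j=1..k. - (b j ^ ?h)) = (\<Prod>j=1..k. (-1) * (b j ^ ?h))" by simp
  also have "\<dots> = (-1) ^ k * B ^ ?h" unfolding B_def prod.distrib prod_constant by (simp add: prod_power_distrib)
  also have "\<dots> = - (B ^ ?h)" using assms(5) by simp
  finally have "[B ^ ?h = - (B ^ ?h)] (mod ?Q)" .
  then have "?Q dvd 2 * B ^ ?h" by (simp add: cong_iff_dvd_diff)
  moreover have pQ: "prime ?Q" using assms(1) by simp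
  moreover have "\<not> ?Q dvd 2"
  proof
    assume "?Q dvd 2" then have "?Q \<le> 2" by (rule zdvd_imp_le) simp
    then show False using assms(2) mod_less_eq_dividend[of q 8] by linarith
  qed
  ultimately have "?Q dvd B ^ ?h" using prime_dvd_mult_iff by blast
  then have "?Q dvd B" using pQ prime_dvd_power by blast
  then obtain j where "j \<in> {1..k}" "?Q dvd b j" unfolding B_def using pQ
    by (meson prime_dvd_prod_iff finite_atLeastAtMost)
  then show False using nb by blast
qed

end
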